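(* If $\mathcal{A}$ is a unital separable $\mathbf{matrix}$-tracially stable $C^*$-algebra, then $\mathrm{AT}(\mathcal{A})=\mathrm{AT}_{\mathrm{LFD}}(\mathcal{A})$.
   Context: Fix a free ultrafilter $\mathcal{U}$ on $\mathbb{N}$. For unital $C^*$-algebras $\mathcal{A}_k$ with tracial states $\tau_k$, the tracial ultraproduct $(\mathcal{A}_k,\tau_k)^\mathcal{U}$ is the quotient of the bounded sequences in $\prod_k\mathcal{A}_k$ by those with $\lim_{k\to\mathcal{U}}\tau_k(a_k^*a_k)=0$; $(a_k)_\mathcal{U}$ is the class of $(a_k)$. A unital $*$-homomorphism $\pi:\mathcal{A}\to(\mathcal{A}_k,\tau_k)^\mathcal{U}$ is approximately liftable if there are $E\in\mathcal{U}$ and unital $*$-homomorphisms $\pi_k:\mathcal{A}\to\mathcal{A}_k$ ($k\in E$) with $\pi(a)=(\pi_k(a))_\mathcal{U}$ for all $a$ ($\pi_k=0$ for $k\notin E$). $\mathcal{A}$ is $\mathbf{matrix}$-tracially stable if every unital $*$-homomorphism $\mathcal{A}\to(\mathcal{A}_k,\tau_k)^\mathcal{U}$ with each $\mathcal{A}_k$ a full matrix algebra $\mathbb{M}_{n}(\mathbb{C})$ and $\tau_k$ a tracial state is approximately liftable. $\mathrm{tr}_n$ is the normalized trace on $\mathbb{M}_n$, $\|x\|_{2,\mathrm{tr}_n}=\sqrt{\mathrm{tr}_n(x^*x)}$. A tracial state $\tau$ on $\mathcal{A}$ is amenable if there are unital completely positive maps $\varphi_k:\mathcal{A}\to\mathbb{M}_{n(k)}$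 with $\lim_k\|\varphi_k(ab)-\varphi_k(a)\varphi_k(b)\|_{2,\mathrm{tr}_{n(k)}}=0$ and $\tau(a)=\lim_k\mathrm{tr}_{n(k)}(\varphi_k(a))$ for all $a,b$; $\mathrm{AT}(\mathcal{A})$ is the set of amenable traces. A tracial state $\tau$ is locally finite dimensional if there are unital completely positive maps $\varphi_k:\mathcal{A}\to\mathbb{M}_{n(k)}$ with $\mathrm{tr}_{n(k)}\circ\varphi_k\to\tau$ weak-$*$ and $\lim_k d(a,\mathcal{A}_{\varphi_k})=0$ for every $a\in\mathcal{A}$, where $\mathcal{A}_{\varphi_k}$ is the multiplicative domain of $\varphi_k$ and $d(a,\mathcal{A}_{\varphi_k})=\inf_{b\in\mathcal{A}_{\varphi_k}}\|a-b\|$; $\mathrm{AT}_{\mathrm{LFD}}(\mathcal{A})$ is the set of such traces. *)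

theory Defs
  imports "HOL-Analysis.Analysis" "Jordan_Normal_Form.Matrix"
begin

text \<open>A unital C*-algebra is modelled as a Banach algebra type 'a with unit
(class real_normed_algebra_1, banach) together with a complex scalar
multiplication sc extending the real one and an involution st satisfying
the C*-identity.\<close>

definition cstar_algebra ::
  "(complex \<Rightarrow> 'a::{real_normed_algebra_1,banach} \<Rightarrow> 'a) \<Rightarrow> ('a \<Rightarrow> 'a) \<Rightarrow> bool" where
  "cstar_algebra sc st \<longleftrightarrow>
     (\<forall>r a. sc (complex_of_real r) a = r *\<^sub>R a) \<and>
     (\<forall>c d a. sc (c * d) a = sc c (sc d a)) \<and>
     (\<forall>c d a. sc (c + d) a = sc c a + sc d a) \<and>
     (\<forall>c a b. sc c (a + b) = sc c a + sc c b) \<and>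
     (\<forall>c a b. sc c (a * b) = sc c a * b) \<and>
     (\<forall>c a b. sc c (a * b) = a * sc c b) \<and>
     (\<forall>c a. norm (sc c a) = cmod c * norm a) \<and>
     (\<forall>a. st (st a) = a) \<and>
     (\<forall>a b. st (a + b) = st a + st b) \<and>
     (\<forall>c a. st (sc c a) = sc (cnj c) (st a)) \<and>
     (\<forall>a b. st (a * b) = st b * st a) \<and>
     (\<forall>a. norm (st a * a) = (norm a)\<^sup>2)"

definition separable_alg :: "'a::metric_space itself \<Rightarrow> bool" where
  "separable_alg _ \<longleftrightarrow> (\<exists>D::'a set. countable D \<and> closure D = UNIV)"

definition adj :: "complex mat \<Rightarrow> complex mat" where
  "adj x = mat (dim_col x) (dim_row x) (\<lambda>(i,j). cnj (x $$ (j,i)))"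

definition ntr :: "complex mat \<Rightarrow> complex" where
  "ntr x = (\<Sum>i<dim_row x. x $$ (i,i)) / of_nat (dim_row x)"

definition norm2_tr :: "complex mat \<Rightarrow> real" where
  "norm2_tr x = sqrt (Re (ntr (adj x * x)))"

definition opnorm_mat :: "complex mat \<Rightarrow> real" where
  "opnorm_mat x = Sup {sqrt (\<Sum>i<dim_row x. (cmod (\<Sum>j<dim_col x. x $$ (i,j) * v j))\<^sup>2) | v.
                        (\<Sum>j<dim_col x. (cmod (v j))\<^sup>2) \<le> 1}"

definition pos_mat :: "complex mat \<Rightarrow> bool" where
  "pos_mat x \<longleftrightarrow> (\<exists>b \<in> carrier_mat (dim_row x) (dim_row x). x = adj b * b)"

definition pos_amp :: "('a::real_normed_algebra_1 \<Rightarrow> 'a) \<Rightarrow> nat \<Rightarrow> (nat \<Rightarrow> nat \<Rightarrow> 'a) \<Rightarrow> bool" where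
  "pos_amp st k X \<longleftrightarrow> (\<exists>B. \<forall>i<k. \<forall>j<k. X i j = (\<Sum>l<k. st (B l i) * B l j))"

definition amp :: "nat \<Rightarrow> ('a \<Rightarrow> complex mat) \<Rightarrow> nat \<Rightarrow> (nat \<Rightarrow> nat \<Rightarrow> 'a) \<Rightarrow> complex mat" where
  "amp n \<phi> k X = mat (k * n) (k * n) (\<lambda>(r,s). \<phi> (X (r div n) (s div n)) $$ (r mod n, s mod n))"

definition complex_linear_into ::
  "(complex \<Rightarrow> 'a::real_normed_algebra_1 \<Rightarrow> 'a) \<Rightarrow> nat \<Rightarrow> ('a \<Rightarrow> complex mat) \<Rightarrow> bool" where
  "complex_linear_into sc n \<phi> \<longleftrightarrow>
     (\<forall>a. \<phi> a \<in> carrier_mat n n) \<and>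
     (\<forall>a b. \<phi> (a + b) = \<phi> a + \<phi> b) \<and>
     (\<forall>c a. \<phi> (sc c a) = c \<cdot>\<^sub>m \<phi> a)"

definition ucp ::
  "(complex \<Rightarrow> 'a::real_normed_algebra_1 \<Rightarrow> 'a) \<Rightarrow> ('a \<Rightarrow> 'a) \<Rightarrow> nat \<Rightarrow> ('a \<Rightarrow> complex mat) \<Rightarrow> bool" where
  "ucp sc st n \<phi> \<longleftrightarrow> complex_linear_into sc n \<phi> \<and> \<phi> 1 = 1\<^sub>m n \<and>
     (\<forall>k X. pos_amp st k X \<longrightarrow> pos_mat (amp n \<phi> k X))"

definition ustar_hom ::
  "(complex \<Rightarrow> 'a::real_normed_algebra_1 \<Rightarrow> 'a) \<Rightarrow> ('a \<Rightarrow> 'a) \<Rightarrow> nat \<Rightarrow> ('a \<Rightarrow> complex mat) \<Rightarrow> bool" where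
  "ustar_hom sc st n \<pi> \<longleftrightarrow> complex_linear_into sc n \<pi> \<and> \<pi> 1 = 1\<^sub>m n \<and>
     (\<forall>a b. \<pi> (a * b) = \<pi> a * \<pi> b) \<and> (\<forall>a. \<pi> (st a) = adj (\<pi> a))"

definition mult_domain :: "('a::real_normed_algebra_1 \<Rightarrow> complex mat) \<Rightarrow> 'a set" where
  "mult_domain \<phi> = {a. \<forall>b. \<phi> (a * b) = \<phi> a * \<phi> b \<and> \<phi> (b * a) = \<phi> b * \<phi> a}"

definition tracial_state ::
  "(complex \<Rightarrow> 'a::real_normed_algebra_1 \<Rightarrow> 'a) \<Rightarrow> ('a \<Rightarrow> 'a) \<Rightarrow> ('a \<Rightarrow> complex) \<Rightarrow> bool" where
  "tracial_state sc st \<tau> \<longleftrightarrow>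
     (\<forall>a b. \<tau> (a + b) = \<tau> a + \<tau> b) \<and> (\<forall>c a. \<tau> (sc c a) = c * \<tau> a) \<and>
     (\<forall>a. Im (\<tau> (st a * a)) = 0 \<and> Re (\<tau> (st a * a)) \<ge> 0) \<and>
     \<tau> 1 = 1 \<and> (\<forall>a b. \<tau> (a * b) = \<tau> (b * a))"

definition AT ::
  "(complex \<Rightarrow> 'a::real_normed_algebra_1 \<Rightarrow> 'a) \<Rightarrow> ('a \<Rightarrow> 'a) \<Rightarrow> ('a \<Rightarrow> complex) set" where
  "AT sc st = {\<tau>. tracial_state sc st \<tau> \<and>
     (\<exists>(n::nat \<Rightarrow> nat) (\<phi>::nat \<Rightarrow> 'a \<Rightarrow> complex mat).
        (\<forall>k. n k \<ge> 1 \<and> ucp sc st (n k) (\<phi> k)) \<and>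
        (\<forall>a b. (\<lambda>k. norm2_tr (\<phi> k (a * b) - \<phi> k a * \<phi> k b)) \<longlonglongrightarrow> 0) \<and>
        (\<forall>a. (\<lambda>k. ntr (\<phi> k a)) \<longlonglongrightarrow> \<tau> a))}"

definition AT_LFD ::
  "(complex \<Rightarrow> 'a::{real_normed_algebra_1} \<Rightarrow> 'a) \<Rightarrow> ('a \<Rightarrow> 'a) \<Rightarrow> ('a \<Rightarrow> complex) set" where
  "AT_LFD sc st = {\<tau>. tracial_state sc st \<tau> \<and>
     (\<exists>(n::nat \<Rightarrow> nat) (\<phi>::nat \<Rightarrow> 'a \<Rightarrow> complex mat).
        (\<forall>k. n k \<ge> 1 \<and> ucp sc st (n k) (\<phi> k)) \<and>
        (\<forall>a. (\<lambda>k. ntr (\<phi> k a)) \<longlonglongrightarrow> \<tau> a) \<and>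
        (\<forall>a. (\<lambda>k. infdist a (mult_domain (\<phi> k))) \<longlonglongrightarrow> 0))}"

definition free_ultrafilter :: "nat filter \<Rightarrow> bool" where
  "free_ultrafilter U \<longleftrightarrow> U \<noteq> bot \<and>
     (\<forall>P. eventually P U \<or> eventually (\<lambda>k. \<not> P k) U) \<and>
     (\<forall>m. eventually (\<lambda>k. k \<noteq> m) U)"

definition tracial_state_mat :: "nat \<Rightarrow> (complex mat \<Rightarrow> complex) \<Rightarrow> bool" where
  "tracial_state_mat n t \<longleftrightarrow>
     (\<forall>x\<in>carrier_mat n n. \<forall>y\<in>carrier_mat n n. t (x + y) = t x + t y \<and> t (x * y) = t (y * x)) \<and>
     (\<forall>c. \<forall>x\<in>carrier_mat n n. t (c \<cdot>\<^sub>m x) = c * t x) \<and>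
     (\<forall>x\<in>carrier_mat n n. Im (t (adj x * x)) = 0 \<and> Re (t (adj x * x)) \<ge> 0) \<and>
     t (1\<^sub>m n) = 1"

text \<open>A sequence (x_k) represents 0 in the tracial ultraproduct.\<close>
definition ultra_null :: "nat filter \<Rightarrow> (nat \<Rightarrow> complex mat \<Rightarrow> complex) \<Rightarrow> (nat \<Rightarrow> complex mat) \<Rightarrow> bool" where
  "ultra_null U t x \<longleftrightarrow> ((\<lambda>k. t k (adj (x k) * x k)) \<longlongrightarrow> 0) U"

text \<open>A unital *-homomorphism pi : A -> (M_{n k}, t_k)^U, presented by a choice of
bounded representatives rho a = (rho a k)_k of pi(a); the *-homomorphism
identities hold modulo the null sequences.\<close>
definition ustar_hom_ultra ::
  "(complex \<Rightarrow> 'a::real_normed_algebra_1 \<Rightarrow> 'a) \<Rightarrow> ('a \<Rightarrow> 'a) \<Rightarrow> nat filter \<Rightarrow> (nat \<Rightarrow> nat) \<Rightarrow>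
   (nat \<Rightarrow> complex mat \<Rightarrow> complex) \<Rightarrow> ('a \<Rightarrow> nat \<Rightarrow> complex mat) \<Rightarrow> bool" where
  "ustar_hom_ultra sc st U n t \<rho> \<longleftrightarrow>
     (\<forall>a k. \<rho> a k \<in> carrier_mat (n k) (n k)) \<and>
     (\<forall>a. \<exists>B. \<forall>k. opnorm_mat (\<rho> a k) \<le> B) \<and>
     (\<forall>a b. ultra_null U t (\<lambda>k. \<rho> (a + b) k - (\<rho> a k + \<rho> b k))) \<and>
     (\<forall>c a. ultra_null U t (\<lambda>k. \<rho> (sc c a) k - c \<cdot>\<^sub>m \<rho> a k)) \<and>
     (\<forall>a b. ultra_null U t (\<lambda>k. \<rho> (a * b) k - \<rho> a k * \<rho> b k)) \<and>
     (\<forall>a. ultra_null U t (\<lambda>k. \<rho> (st a) k - adj (\<rho> a k))) \<and>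
     ultra_null U t (\<lambda>k. \<rho> 1 k - 1\<^sub>m (n k))"

definition approx_liftable ::
  "(complex \<Rightarrow> 'a::real_normed_algebra_1 \<Rightarrow> 'a) \<Rightarrow> ('a \<Rightarrow> 'a) \<Rightarrow> nat filter \<Rightarrow> (nat \<Rightarrow> nat) \<Rightarrow>
   (nat \<Rightarrow> complex mat \<Rightarrow> complex) \<Rightarrow> ('a \<Rightarrow> nat \<Rightarrow> complex mat) \<Rightarrow> bool" where
  "approx_liftable sc st U n t \<rho> \<longleftrightarrow>
     (\<exists>E \<pi>. eventually (\<lambda>k. k \<in> E) U \<and>
        (\<forall>k\<in>E. ustar_hom sc st (n k) (\<pi> k)) \<and>
        (\<forall>a. ultra_null U t (\<lambda>k. \<rho> a k - (if k \<in> E then \<pi> k a else 0\<^sub>m (n k) (n k)))))"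

definition matrix_tracially_stable ::
  "nat filter \<Rightarrow> (complex \<Rightarrow> 'a::real_normed_algebra_1 \<Rightarrow> 'a) \<Rightarrow> ('a \<Rightarrow> 'a) \<Rightarrow> bool" where
  "matrix_tracially_stable U sc st \<longleftrightarrow>
     (\<forall>(n::nat \<Rightarrow> nat) t \<rho>. (\<forall>k. n k \<ge> 1 \<and> tracial_state_mat (n k) (t k)) \<longrightarrow>
        ustar_hom_ultra sc st U n t \<rho> \<longrightarrow> approx_liftable sc st U n t \<rho>)"

end

theory Submission
  imports Defs "HOL-Computational_Algebra.Formal_Power_Series"
begin

section \<open>C*-algebra basics\<close>

context
  fixes sc :: "complex \<Rightarrow> 'a::{real_normed_algebra_1,banach} \<Rightarrow> 'a" and st :: "'a \<Rightarrow> 'a"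
  assumes C: "cstar_algebra sc st"
begin

lemma st_add: "st (a + b) = st a + st b" using C unfolding cstar_algebra_def by blast
lemma st_mult: "st (a * b) = st b * st a" using C unfolding cstar_algebra_def by blast
lemma st_st: "st (st a) = a" using C unfolding cstar_algebra_def by blast
lemma sc_real: "sc (complex_of_real r) a = r *\<^sub>R a" using C unfolding cstar_algebra_def by simp
lemma st_sc: "st (sc c a) = sc (cnj c) (st a)" using C unfolding cstar_algebra_def by blast
lemma cstar_id: "norm (st a * a) = (norm a)\<^sup>2" using C unfolding cstar_algebra_def by blast

lemma st_0: "st 0 = 0"
proof -
  have "st (0 + 0) = st 0 + st 0" by (rule st_add)
  then show ?thesis by simp
qed

lemma st_1: "st 1 = 1"
proof -
  have "st (st 1 * 1) = st 1 * st (st 1)" by (rule st_mult)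
  then show ?thesis by (simp add: st_st)
qed

lemma st_scaleR: "st (r *\<^sub>R a) = r *\<^sub>R st a"
proof -
  have "st (sc (complex_of_real r) a) = sc (cnj (complex_of_real r)) (st a)" by (rule st_sc)
  then show ?thesis by (simp add: sc_real)
qed

lemma st_uminus: "st (- a) = - st a"
proof -
  have "st (a + - a) = st a + st (- a)" by (rule st_add)
  then show ?thesis by (simp add: st_0 eq_neg_iff_add_eq_0 add.commute)
qed

lemma st_diff: "st (a - b) = st a - st b"
  using st_add[of a "- b"] st_uminus[of b] by simp

lemma st_norm_le: "norm a \<le> norm (st a)"
proof (cases "norm a = 0")
  case True then show ?thesis by simp
next
  case False
  have "(norm a)^2 \<le> norm (st a) * norm a" using cstar_id[of a] norm_mult_ineq[of "st a" a] by simp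
  then show ?thesis using False by (simp add: power2_eq_square)
qed

lemma st_norm: "norm (st a) = norm a"
  using st_norm_le[of a] st_norm_le[of "st a"] by (simp add: st_st)

lemma st_bl: "bounded_linear st"
  by (rule bounded_linear_intro[where K=1]) (auto simp: st_add st_scaleR st_norm)

lemma st_pow: "st x = x \<Longrightarrow> st (x ^ k) = x ^ k"
  by (induction k) (auto simp: st_1 st_mult power_commutes)

end

lemma gbin_half_bound: "\<bar>(1/2::real) gchoose k\<bar> \<le> 1"
proof (induction k)
  case 0 then show ?case by simp
next
  case (Suc k)
  have e: "of_nat (Suc k) * ((1/2::real) gchoose (Suc k)) = (1/2 - of_nat k) * ((1/2::real) gchoose k)"
    using gbinomial_mult_1[of "1/2::real" k] by (simp add: algebra_simps)
  have "\<bar>1/2 - real k\<bar> \<le> real (Suc k)" by simp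
  then have "\<bar>(1/2 - real k) * ((1/2::real) gchoose k)\<bar> \<le> real (Suc k) * 1"
    using Suc.IH mult_mono[of "\<bar>1/2 - real k\<bar>" "real (Suc k)" "\<bar>(1/2::real) gchoose k\<bar>" 1]
    by (simp add: abs_mult)
  then have "real (Suc k) * \<bar>(1/2::real) gchoose (Suc k)\<bar> \<le> real (Suc k) * 1"
    using e by (metis abs_mult abs_of_nat)
  then show ?case by (simp del: of_nat_Suc)
qed

lemma gbin_one: "((1::real) gchoose k) = (if k = 0 then 1 else if k = 1 then 1 else 0)"
proof -
  have "((1::real) gchoose k) = of_nat (1 choose k)" using binomial_gbinomial[of 1 k] by (metis of_nat_1)
  then show ?thesis by (cases k) (auto simp: binomial_eq_0)
qed

lemma sqrt_exists:
  fixes sc :: "complex \<Rightarrow> 'a::{real_normed_algebra_1,banach} \<Rightarrow> 'a" and st :: "'a \<Rightarrow> 'a"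
  assumes C: "cstar_algebra sc st" and hx: "st x = x" and nx: "norm x < 1"
  shows "\<exists>s. st s = s \<and> s * s = 1 - x"
proof -
  define c where "c k = ((1/2::real) gchoose k) * (-1)^k" for k
  define f where "f k = c k *\<^sub>R x^k" for k
  have nb: "norm (f k) \<le> norm x ^ k" for k
  proof -
    have "norm (f k) = \<bar>c k\<bar> * norm (x^k)" by (simp add: f_def)
    also have "\<dots> \<le> 1 * norm x ^ k"
      apply (rule mult_mono)
      using gbin_half_bound[of k] norm_power_ineq[of x k] by (auto simp: c_def abs_mult)
    finally show ?thesis by simp
  qed
  have sn: "summable (\<lambda>k. norm (f k))"
    apply (rule summable_comparison_test[where g="\<lambda>k. norm x ^ k"])
    using nb nx by auto
  define s where "s = suminf f"
  have cp: "(\<lambda>k. \<Sum>i\<le>k. f i * f (k - i)) sums (s * s)"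
    unfolding s_def by (rule Cauchy_product_sums[OF sn sn])
  have tm: "(\<Sum>i\<le>k. f i * f (k - i)) = (if k = 0 then 1 else if k = 1 then - x else 0)" for k
  proof -
    have "(\<Sum>i\<le>k. f i * f (k - i)) = (\<Sum>i\<le>k. (c i * c (k - i)) *\<^sub>R x ^ k)"
      apply (rule sum.cong, simp)
      by (simp add: f_def power_add[symmetric])
    also have "\<dots> = (\<Sum>i\<le>k. c i * c (k - i)) *\<^sub>R x ^ k"
      by (simp add: scaleR_left.sum)
    also have "(\<Sum>i\<le>k. c i * c (k - i)) = (-1)^k * (\<Sum>i\<le>k. ((1/2::real) gchoose i) * ((1/2) gchoose (k - i)))"
      unfolding sum_distrib_left
      apply (rule sum.cong, simp)
      by (simp add: c_def power_add[symmetric])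
    also have "(\<Sum>i\<le>k. ((1/2::real) gchoose i) * ((1/2) gchoose (k - i))) = (1::real) gchoose k"
      using gbinomial_Vandermonde[of "1/2::real" "1/2" k] by (simp add: atMost_atLeast0)
    finally show ?thesis by (auto simp: gbin_one)
  qed
  have "(\<lambda>k. if k = 0 then 1 else if k = 1 then - x else 0) sums (\<Sum>k\<in>{0,1::nat}. if k = 0 then 1 else if k = 1 then - x else 0)"
    by (rule sums_finite) auto
  then have "(\<lambda>k. if k = 0 then 1 else if k = 1 then - x else 0) sums (1 - x)" by simp
  with cp tm have ss: "s * s = 1 - x" using sums_unique2 by fastforce
  have sf: "summable f" using sn by (rule summable_norm_cancel)
  have "st s = (\<Sum>k. st (f k))" unfolding s_def
    using bounded_linear.suminf[OF st_bl[OF C] sf] by simp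
  also have "(\<lambda>k. st (f k)) = f" 
    by (rule ext) (simp add: f_def st_scaleR[OF C] st_pow[OF C hx])
  finally have "st s = s" by (simp add: s_def)
  with ss show ?thesis by blast
qed

lemma pos_decomp:
  fixes sc :: "complex \<Rightarrow> 'a::{real_normed_algebra_1,banach} \<Rightarrow> 'a" and st :: "'a \<Rightarrow> 'a"
  assumes C: "cstar_algebra sc st" and r: "(norm a)^2 < r"
  shows "\<exists>t. st t * t = r *\<^sub>R 1 - st a * a"
proof -
  have r0: "r > 0" using r by (smt (verit) zero_le_power2)
  define x where "x = (1/r) *\<^sub>R (st a * a)"
  have hx: "st x = x" unfolding x_def by (simp add: st_scaleR[OF C] st_mult[OF C] st_st[OF C])
  have nx: "norm x < 1" unfolding x_def using r r0 cstar_id[OF C, of a] by (simp add: field_simps)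
  obtain s where s: "st s = s" "s * s = 1 - x" using sqrt_exists[OF C hx nx] by blast
  define t where "t = sqrt r *\<^sub>R s"
  have "st t * t = (sqrt r * sqrt r) *\<^sub>R (s * s)" unfolding t_def using s(1)
    by (simp add: st_scaleR[OF C])
  also have "\<dots> = r *\<^sub>R (1 - x)" using r0 s(2) by simp
  also have "\<dots> = r *\<^sub>R 1 - st a * a" using r0 by (simp add: x_def scaleR_diff_right)
  finally show ?thesis by blast
qed

section \<open>Matrix helpers\<close>

definition mv :: "complex mat \<Rightarrow> (nat \<Rightarrow> complex) \<Rightarrow> nat \<Rightarrow> complex" where
  "mv M v p = (\<Sum>q<dim_col M. M $$ (p,q) * v q)"
definition sq :: "nat \<Rightarrow> (nat \<Rightarrow> complex) \<Rightarrow> real" where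
  "sq n v = (\<Sum>i<n. (cmod (v i))^2)"
definition qf :: "nat \<Rightarrow> complex mat \<Rightarrow> (nat \<Rightarrow> complex) \<Rightarrow> complex" where
  "qf N M w = (\<Sum>r<N. \<Sum>s<N. cnj (w r) * M $$ (r,s) * w s)"

lemma sq_nonneg: "0 \<le> sq n v" unfolding sq_def by (auto intro: sum_nonneg)

lemma cnj_mult_self: "cnj z * z = complex_of_real ((cmod z)^2)"
  by (metis complex_norm_square mult.commute)

lemma sum_cnj_self: "(\<Sum>i<n. cnj (v i) * v i) = complex_of_real (sq n v)"
  unfolding sq_def by (simp add: cnj_mult_self)

lemma adj_dims[simp]: "dim_row (adj b) = dim_col b" "dim_col (adj b) = dim_row b"
  unfolding adj_def by auto

lemma adj_index[simp]: "i < dim_col b \<Longrightarrow> j < dim_row b \<Longrightarrow> adj b $$ (i,j) = cnj (b $$ (j,i))"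
  unfolding adj_def by auto

lemma mult_index:
  assumes "A \<in> carrier_mat n m" "B \<in> carrier_mat m k" "i < n" "j < k"
  shows "(A * B) $$ (i,j) = (\<Sum>l<m. A $$ (i,l) * B $$ (l,j))"
  using assms by (simp add: scalar_prod_def lessThan_atLeast0)

lemma adj_mult_index:
  assumes "b \<in> carrier_mat m n" "c \<in> carrier_mat m k" "i < n" "j < k"
  shows "(adj b * c) $$ (i,j) = (\<Sum>l<m. cnj (b $$ (l,i)) * c $$ (l,j))"
proof -
  have "adj b \<in> carrier_mat n m" using assms(1) by auto
  then have "(adj b * c) $$ (i,j) = (\<Sum>l<m. adj b $$ (i,l) * c $$ (l,j))"
    using mult_index[OF _ assms(2-4)] by blast
  then show ?thesis using assms by simp
qed

lemma adj_carrier: "b \<in> carrier_mat m n \<Longrightarrow> adj b \<in> carrier_mat n m" by auto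

lemma qf_adj:
  assumes b: "b \<in> carrier_mat N N"
  shows "qf N (adj b * b) w = complex_of_real (sq N (mv b w))"
proof -
  have "qf N (adj b * b) w = (\<Sum>r<N. \<Sum>s<N. cnj (w r) * (\<Sum>l<N. cnj (b $$ (l,r)) * b $$ (l,s)) * w s)"
    unfolding qf_def using adj_mult_index[OF b b] by simp
  also have "\<dots> = (\<Sum>r<N. \<Sum>s<N. \<Sum>l<N. cnj (b $$ (l,r) * w r) * (b $$ (l,s) * w s))"
  proof (intro sum.cong refl)
    fix r s
    show "cnj (w r) * (\<Sum>l<N. cnj (b $$ (l,r)) * b $$ (l,s)) * w s = (\<Sum>l<N. cnj (b $$ (l,r) * w r) * (b $$ (l,s) * w s))"
      unfolding sum_distrib_left sum_distrib_right by (intro sum.cong refl) (simp add: mult_ac)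
  qed
  also have "\<dots> = (\<Sum>r<N. \<Sum>l<N. \<Sum>s<N. cnj (b $$ (l,r) * w r) * (b $$ (l,s) * w s))"
    by (rule sum.cong[OF refl], rule sum.swap)
  also have "\<dots> = (\<Sum>l<N. \<Sum>r<N. \<Sum>s<N. cnj (b $$ (l,r) * w r) * (b $$ (l,s) * w s))"
    by (rule sum.swap)
  also have "\<dots> = (\<Sum>l<N. cnj (mv b w l) * mv b w l)"
  proof (intro sum.cong refl)
    fix l
    have "cnj (mv b w l) * mv b w l = (\<Sum>r<N. cnj (b $$ (l,r) * w r)) * (\<Sum>s<N. b $$ (l,s) * w s)"
      using b by (simp add: mv_def cnj_sum)
    also have "\<dots> = (\<Sum>r<N. \<Sum>s<N. cnj (b $$ (l,r) * w r) * (b $$ (l,s) * w s))"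
      by (rule sum_product)
    finally show "(\<Sum>r<N. \<Sum>s<N. cnj (b $$ (l,r) * w r) * (b $$ (l,s) * w s)) = cnj (mv b w l) * mv b w l" by simp
  qed
  also have "\<dots> = complex_of_real (sq N (mv b w))" by (rule sum_cnj_self)
  finally show ?thesis .
qed

lemma sum_split: "(\<Sum>r<n+(m::nat). f r) = (\<Sum>r<n. f r) + (\<Sum>p<m. f (n+p))"
  by (induction m) (auto simp: add_ac)

lemma divmod_help1: "p < n \<Longrightarrow> (n + p) div n = (1::nat)"
proof -
  assume a: "p < n"
  then have "n \<noteq> 0" by auto
  from div_add_self1[OF this, of p] have "(n+p) div n = p div n + 1" .
  then show ?thesis using div_less[OF a] by simp
qed
lemma divmod_help2: "p < n \<Longrightarrow> (n + p) mod n = (p::nat)"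
  by simp

section \<open>Linear maps into matrices\<close>

context
  fixes sc :: "complex \<Rightarrow> 'a::{real_normed_algebra_1,banach} \<Rightarrow> 'a" and st :: "'a \<Rightarrow> 'a"
    and n :: nat and \<phi> :: "'a \<Rightarrow> complex mat"
  assumes C: "cstar_algebra sc st" and L: "complex_linear_into sc n \<phi>"
begin

lemma lin_carrier[simp]: "\<phi> a \<in> carrier_mat n n" using L unfolding complex_linear_into_def by blast
lemma lin_dims[simp]: "dim_row (\<phi> a) = n" "dim_col (\<phi> a) = n" by (metis carrier_matD lin_carrier)+
lemma lin_add: "\<phi> (a + b) = \<phi> a + \<phi> b" using L unfolding complex_linear_into_def by blast
lemma lin_sc: "\<phi> (sc c a) = c \<cdot>\<^sub>m \<phi> a" using L unfolding complex_linear_into_def by blast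

lemma lin_add_idx: "p < n \<Longrightarrow> q < n \<Longrightarrow> \<phi> (a + b) $$ (p,q) = \<phi> a $$ (p,q) + \<phi> b $$ (p,q)"
  by (simp add: lin_add)

lemma lin_diff_idx: "p < n \<Longrightarrow> q < n \<Longrightarrow> \<phi> (a - b) $$ (p,q) = \<phi> a $$ (p,q) - \<phi> b $$ (p,q)"
  using lin_add_idx[of p q "a - b" b] by simp

lemma lin_zero_idx: "p < n \<Longrightarrow> q < n \<Longrightarrow> \<phi> 0 $$ (p,q) = 0"
  using lin_diff_idx[of p q 0 0] by simp

lemma lin_scaleR_idx: "p < n \<Longrightarrow> q < n \<Longrightarrow> \<phi> (r *\<^sub>R a) $$ (p,q) = complex_of_real r * \<phi> a $$ (p,q)"
  using lin_sc[of "complex_of_real r" a] sc_real[OF C, of r a] by simp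

lemma lin_sc_idx: "p < n \<Longrightarrow> q < n \<Longrightarrow> \<phi> (sc c a) $$ (p,q) = c * \<phi> a $$ (p,q)"
  using lin_sc[of c a] by simp

lemma lin_sum_idx: "p < n \<Longrightarrow> q < n \<Longrightarrow> \<phi> (\<Sum>l<(k::nat). f l) $$ (p,q) = (\<Sum>l<k. \<phi> (f l) $$ (p,q))"
  by (induction k) (auto simp: lin_zero_idx lin_add_idx)

end


lemma pos_mat_props:
  assumes "pos_mat M" "dim_row M = N"
  shows "\<exists>y\<ge>0. qf N M w = complex_of_real y"
    and "r < N \<Longrightarrow> s < N \<Longrightarrow> M $$ (s,r) = cnj (M $$ (r,s))"
proof -
  obtain b where b: "b \<in> carrier_mat N N" "M = adj b * b" using assms unfolding pos_mat_def by auto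
  show "\<exists>y\<ge>0. qf N M w = complex_of_real y" using qf_adj[OF b(1)] b(2) sq_nonneg by blast
  show "r < N \<Longrightarrow> s < N \<Longrightarrow> M $$ (s,r) = cnj (M $$ (r,s))"
    using b adj_mult_index[OF b(1) b(1)] by (simp add: cnj_sum mult.commute)
qed

lemma qf_id: "qf n (1\<^sub>m n) v = complex_of_real (sq n v)"
proof -
  have "(\<Sum>q<n. cnj (v p) * 1\<^sub>m n $$ (p,q) * v q) = cnj (v p) * v p" if "p < n" for p
  proof -
    have "(\<Sum>q<n. cnj (v p) * 1\<^sub>m n $$ (p,q) * v q) = (\<Sum>q<n. if p = q then cnj (v p) * v q else 0)"
      using that by (intro sum.cong) auto
    also have "\<dots> = cnj (v p) * v p" using that by (simp add: sum.delta)
    finally show ?thesis .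
  qed
  then show ?thesis unfolding qf_def using sum_cnj_self[where n=n and v=v] by simp
qed

lemma amp_idx: "i < k*n \<Longrightarrow> j < k*n \<Longrightarrow> amp n \<phi> k X $$ (i,j) = \<phi> (X (i div n) (j div n)) $$ (i mod n, j mod n)"
  by (simp add: amp_def)
lemma amp_dim[simp]: "dim_row (amp n \<phi> k X) = k * n" "dim_col (amp n \<phi> k X) = k * n"
  by (simp_all add: amp_def)

context
  fixes sc :: "complex \<Rightarrow> 'a::{real_normed_algebra_1,banach} \<Rightarrow> 'a" and st :: "'a \<Rightarrow> 'a"
    and n :: nat and \<phi> :: "'a \<Rightarrow> complex mat"
  assumes C: "cstar_algebra sc st" and U: "ucp sc st n \<phi>"
begin

lemma ucp_L: "complex_linear_into sc n \<phi>" using U unfolding ucp_def by blast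
lemma ucp_one: "\<phi> 1 = 1\<^sub>m n" using U unfolding ucp_def by blast
lemma ucp_pos: "pos_amp st k X \<Longrightarrow> pos_mat (amp n \<phi> k X)" using U unfolding ucp_def by blast

lemmas L_facts = lin_dims[OF C ucp_L] lin_diff_idx[OF C ucp_L] lin_scaleR_idx[OF C ucp_L]

lemma ucp_H_bound:
  assumes r: "(norm a)^2 < r"
  shows "Re (qf n (\<phi> (st a * a)) v) \<le> r * sq n v"
proof -
  obtain t where t: "st t * t = r *\<^sub>R 1 - st a * a" using pos_decomp[OF C r] by blast
  define X where "X = (\<lambda>(i::nat) (j::nat). st t * t)"
  have "pos_amp st 1 X" unfolding pos_amp_def X_def by (rule exI[of _ "\<lambda>l i. t"]) simp
  then have pm: "pos_mat (amp n \<phi> 1 X)" by (rule ucp_pos)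
  obtain y where y: "y \<ge> 0" "qf n (amp n \<phi> 1 X) v = complex_of_real y"
    using pos_mat_props(1)[OF pm, of n v] by auto
  have "qf n (amp n \<phi> 1 X) v = qf n (\<phi> (st t * t)) v"
    unfolding qf_def by (intro sum.cong refl) (auto simp: amp_def X_def)
  also have "\<dots> = (\<Sum>p<n. \<Sum>q<n. cnj (v p) * (complex_of_real r * 1\<^sub>m n $$ (p,q)) * v q)
      - qf n (\<phi> (st a * a)) v"
    unfolding qf_def t sum_subtractf[symmetric]
    by (intro sum.cong refl) (simp add: L_facts ucp_one algebra_simps)
  also have "(\<Sum>p<n. \<Sum>q<n. cnj (v p) * (complex_of_real r * 1\<^sub>m n $$ (p,q)) * v q)
     = complex_of_real r * qf n (1\<^sub>m n) v"
    unfolding qf_def sum_distrib_left by (intro sum.cong refl) (simp add: mult_ac)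
  finally have "complex_of_real y = complex_of_real r * complex_of_real (sq n v) - qf n (\<phi> (st a * a)) v"
    using y(2) qf_id by simp
  then have "Re (qf n (\<phi> (st a * a)) v) = r * sq n v - y"
    by (metis Re_complex_of_real add_diff_cancel_left' cancel_ab_semigroup_add_class.diff_right_commute
        diff_add_cancel minus_complex.simps(1) of_real_mult)
  then show ?thesis using y(1) by simp
qed

end


context
  fixes sc :: "complex \<Rightarrow> 'a::{real_normed_algebra_1,banach} \<Rightarrow> 'a" and st :: "'a \<Rightarrow> 'a"
    and n :: nat and \<phi> :: "'a \<Rightarrow> complex mat"
  assumes C: "cstar_algebra sc st" and U: "ucp sc st n \<phi>"
begin

lemmas L_facts' = lin_dims[OF C ucp_L[OF C U]]

lemma ucp_2x2:
  shows "\<forall>p<n. \<forall>q<n. \<phi> (st a) $$ (p,q) = cnj (\<phi> a $$ (q,p))"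
    and "sq n (mv (\<phi> a) v) \<le> Re (qf n (\<phi> (st a * a)) v)"
proof -
  define X where "X = (\<lambda>(i::nat) (j::nat). if i = 0 then (if j = 0 then 1 else a) else (if j = 0 then st a else st a * a))"
  define B where "B = (\<lambda>(l::nat) (i::nat). if l = 0 then (if i = 0 then 1 else a) else 0)"
  have "pos_amp st 2 X" unfolding pos_amp_def
  proof (rule exI[of _ B], intro allI impI)
    fix i j :: nat assume "i < 2" "j < 2"
    then have "i = 0 \<or> i = 1" "j = 0 \<or> j = 1" by auto
    then show "X i j = (\<Sum>l<2. st (B l i) * B l j)"
      by (auto simp: X_def B_def numeral_2_eq_2 st_1[OF C] st_0[OF C])
  qed
  then have pm: "pos_mat (amp n \<phi> 2 X)" by (rule ucp_pos[OF C U])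
  define M where "M = amp n \<phi> 2 X"
  have pm': "pos_mat M" using pm M_def by simp
  have dM: "dim_row M = n + n" unfolding M_def by simp
  have e11: "M $$ (p,q) = (if p = q then 1 else 0)" if "p < n" "q < n" for p q
    using that unfolding M_def by (simp add: amp_idx X_def ucp_one[OF C U])
  have e12: "M $$ (p,n+q) = \<phi> a $$ (p,q)" if "p < n" "q < n" for p q
    using that unfolding M_def by (simp add: amp_idx X_def divmod_help1 divmod_help2)
  have e21: "M $$ (n+p,q) = \<phi> (st a) $$ (p,q)" if "p < n" "q < n" for p q
    using that unfolding M_def by (simp add: amp_idx X_def divmod_help1 divmod_help2)
  have e22: "M $$ (n+p,n+q) = \<phi> (st a * a) $$ (p,q)" if "p < n" "q < n" for p q
    using that unfolding M_def by (simp add: amp_idx X_def divmod_help1 divmod_help2)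
  have herm: "\<phi> (st a) $$ (p,q) = cnj (\<phi> a $$ (q,p))" if "p < n" "q < n" for p q
  proof -
    have "M $$ (n+p, q) = cnj (M $$ (q, n+p))"
      using pos_mat_props(2)[OF pm' dM, of q "n+p"] that by simp
    then show ?thesis using that e12 e21 by simp
  qed
  then show "\<forall>p<n. \<forall>q<n. \<phi> (st a) $$ (p,q) = cnj (\<phi> a $$ (q,p))" by blast
  define z where "z = mv (\<phi> a) v"
  have zdef: "z p = (\<Sum>q<n. \<phi> a $$ (p,q) * v q)" for p unfolding z_def mv_def by (simp add: L_facts')
  define w where "w = (\<lambda>r. if r < n then - z r else v (r - n))"
  obtain y where y: "y \<ge> 0" "qf (n+n) M w = complex_of_real y"
    using pos_mat_props(1)[OF pm' dM, of w] by auto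
  have split: "qf (n+n) M w =
      (\<Sum>p<n. \<Sum>q<n. cnj (w p) * M $$ (p,q) * w q)
    + (\<Sum>p<n. \<Sum>q<n. cnj (w p) * M $$ (p,n+q) * w (n+q))
    + (\<Sum>p<n. \<Sum>q<n. cnj (w (n+p)) * M $$ (n+p,q) * w q)
    + (\<Sum>p<n. \<Sum>q<n. cnj (w (n+p)) * M $$ (n+p,n+q) * w (n+q))"
    unfolding qf_def sum_split sum.distrib by (simp add: add_ac)
  have b11: "(\<Sum>p<n. \<Sum>q<n. cnj (w p) * M $$ (p,q) * w q) = complex_of_real (sq n z)"
  proof -
    have "(\<Sum>q<n. cnj (w p) * M $$ (p,q) * w q) = cnj (z p) * z p" if "p < n" for p
    proof -
      have "(\<Sum>q<n. cnj (w p) * M $$ (p,q) * w q) = (\<Sum>q<n. if p = q then cnj (z p) * z q else 0)"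
        using that by (intro sum.cong) (auto simp: e11 w_def)
      also have "\<dots> = cnj (z p) * z p" using that by (simp add: sum.delta)
      finally show ?thesis .
    qed
    then show ?thesis using sum_cnj_self[where n=n and v=z] by simp
  qed
  have b12: "(\<Sum>p<n. \<Sum>q<n. cnj (w p) * M $$ (p,n+q) * w (n+q)) = - complex_of_real (sq n z)"
  proof -
    have "(\<Sum>q<n. cnj (w p) * M $$ (p,n+q) * w (n+q)) = - (cnj (z p) * z p)" if "p < n" for p
    proof -
      have "(\<Sum>q<n. cnj (w p) * M $$ (p,n+q) * w (n+q)) = (\<Sum>q<n. - cnj (z p) * (\<phi> a $$ (p,q) * v q))"
        using that by (intro sum.cong) (auto simp: e12 w_def)
      also have "\<dots> = - cnj (z p) * z p" unfolding zdef[of p] sum_distrib_left by simp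
      finally show ?thesis by simp
    qed
    then have "(\<Sum>p<n. \<Sum>q<n. cnj (w p) * M $$ (p,n+q) * w (n+q)) = (\<Sum>p<n. - (cnj (z p) * z p))"
      by (intro sum.cong) auto
    then show ?thesis using sum_cnj_self[where n=n and v=z] by (simp add: sum_negf)
  qed
  have b21: "(\<Sum>p<n. \<Sum>q<n. cnj (w (n+p)) * M $$ (n+p,q) * w q) = - complex_of_real (sq n z)"
  proof -
    have "(\<Sum>p<n. \<Sum>q<n. cnj (w (n+p)) * M $$ (n+p,q) * w q)
        = (\<Sum>p<n. \<Sum>q<n. cnj (\<phi> a $$ (q,p) * v p) * (- z q))"
      by (intro sum.cong refl) (auto simp: e21 herm w_def mult_ac)
    also have "\<dots> = (\<Sum>q<n. \<Sum>p<n. cnj (\<phi> a $$ (q,p) * v p) * (- z q))"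
      by (rule sum.swap)
    also have "\<dots> = (\<Sum>q<n. - (cnj (z q) * z q))"
    proof (rule sum.cong[OF refl])
      fix q
      show "(\<Sum>p<n. cnj (\<phi> a $$ (q,p) * v p) * (- z q)) = - (cnj (z q) * z q)"
        unfolding zdef[of q] cnj_sum sum_distrib_right by (simp add: sum_negf)
    qed
    finally show ?thesis using sum_cnj_self[where n=n and v=z] by (simp add: sum_negf)
  qed
  have b22: "(\<Sum>p<n. \<Sum>q<n. cnj (w (n+p)) * M $$ (n+p,n+q) * w (n+q)) = qf n (\<phi> (st a * a)) v"
    unfolding qf_def by (intro sum.cong refl) (auto simp: e22 w_def)
  have "complex_of_real y = - complex_of_real (sq n z) + qf n (\<phi> (st a * a)) v"
    using y(2) split b11 b12 b21 b22 by simp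
  then have "y = - sq n z + Re (qf n (\<phi> (st a * a)) v)"
    by (metis Re_complex_of_real plus_complex.simps(1) uminus_complex.simps(1))
  then show "sq n (mv (\<phi> a) v) \<le> Re (qf n (\<phi> (st a * a)) v)" using y(1) z_def by simp
qed

lemma ucp_star: "\<phi> (st a) = adj (\<phi> a)"
proof (rule eq_matI)
  fix i j assume "i < dim_row (adj (\<phi> a))" "j < dim_col (adj (\<phi> a))"
  then show "\<phi> (st a) $$ (i,j) = adj (\<phi> a) $$ (i,j)" using ucp_2x2(1)[of a] by (simp add: L_facts')
qed (simp_all add: L_facts')

lemma ucp_bound_r: "(norm a)^2 < r \<Longrightarrow> sq n (mv (\<phi> a) v) \<le> r * sq n v"
  using ucp_2x2(2)[of a v] ucp_H_bound[OF C U, of a r v] by simp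

lemma ucp_bound: "sq n (mv (\<phi> a) v) \<le> (norm a)^2 * sq n v"
proof (rule field_le_epsilon)
  fix e :: real assume e: "e > 0"
  define r where "r = (norm a)^2 + e / (sq n v + 1)"
  have s0: "sq n v \<ge> 0" by (rule sq_nonneg)
  have "(norm a)^2 < r" unfolding r_def using e s0 by simp
  then have "sq n (mv (\<phi> a) v) \<le> r * sq n v" by (rule ucp_bound_r)
  also have "r * sq n v = (norm a)^2 * sq n v + e * (sq n v / (sq n v + 1))"
    unfolding r_def using s0 by (simp add: field_simps)
  also have "\<dots> \<le> (norm a)^2 * sq n v + e * 1"
    using e s0 by (intro add_left_mono mult_left_mono) auto
  finally show "sq n (mv (\<phi> a) v) \<le> (norm a)^2 * sq n v + e" by simp
qed

end


section \<open>Norm consequences\<close>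

definition vn :: "nat \<Rightarrow> (nat \<Rightarrow> complex) \<Rightarrow> real" where "vn n v = sqrt (sq n v)"

definition ev :: "nat \<Rightarrow> nat \<Rightarrow> complex" where "ev i = (\<lambda>j. if j = i then 1 else 0)"

lemma vn_nonneg: "vn n v \<ge> 0" unfolding vn_def by (simp add: sq_nonneg)

lemma vn_L2: "vn n v = L2_set (\<lambda>i. cmod (v i)) {..<n}"
  unfolding vn_def sq_def L2_set_def by simp

lemma vn_triangle:
  assumes "\<And>p. p < n \<Longrightarrow> u p = x p - y p"
  shows "vn n u \<le> vn n x + vn n y"
proof -
  have "vn n u \<le> L2_set (\<lambda>i. cmod (x i) + cmod (y i)) {..<n}"
    unfolding vn_L2 using assms by (intro L2_set_mono) (auto simp: norm_triangle_ineq4)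
  also have "\<dots> \<le> vn n x + vn n y" unfolding vn_L2 by (rule L2_set_triangle_ineq)
  finally show ?thesis .
qed

lemma vn_cong: "(\<And>p. p < n \<Longrightarrow> u p = x p) \<Longrightarrow> vn n u = vn n x"
  unfolding vn_def sq_def by simp

lemma sq_ev: "i < n \<Longrightarrow> sq n (ev i) = 1"
proof -
  assume i: "i < n"
  have "sq n (ev i) = (\<Sum>j<n. if j = i then 1 else 0)" unfolding sq_def by (rule sum.cong) (auto simp: ev_def)
  also have "\<dots> = 1" using i by simp
  finally show ?thesis .
qed

lemma mv_ev: "mv M (ev i) p = (if i < dim_col M then M $$ (p,i) else 0)"
  unfolding mv_def ev_def by (simp add: if_distrib sum.delta cong: if_cong)

lemma mv_minus: "A \<in> carrier_mat n n \<Longrightarrow> B \<in> carrier_mat n n \<Longrightarrow> p < n \<Longrightarrow>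
   mv (A - B) v p = mv A v p - mv B v p"
  unfolding mv_def by (simp add: sum_subtractf algebra_simps)

lemma mv_mult: "A \<in> carrier_mat n n \<Longrightarrow> B \<in> carrier_mat n n \<Longrightarrow> p < n \<Longrightarrow>
   mv (A * B) v p = mv A (mv B v) p"
proof -
  assume A: "A \<in> carrier_mat n n" and B: "B \<in> carrier_mat n n" and p: "p < n"
  have "mv (A * B) v p = (\<Sum>q<n. (\<Sum>l<n. A $$ (p,l) * B $$ (l,q)) * v q)"
  proof -
    have d: "dim_col (A * B) = n" using B by simp
    show ?thesis unfolding mv_def d by (intro sum.cong refl, subst mult_index[OF A B p]) auto
  qed
  also have "\<dots> = (\<Sum>q<n. \<Sum>l<n. A $$ (p,l) * (B $$ (l,q) * v q))"
    unfolding sum_distrib_right by (simp add: mult.assoc)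
  also have "\<dots> = (\<Sum>l<n. \<Sum>q<n. A $$ (p,l) * (B $$ (l,q) * v q))" by (rule sum.swap)
  also have "\<dots> = mv A (mv B v) p" using A B unfolding mv_def by (simp add: sum_distrib_left)
  finally show ?thesis .
qed

definition mbound :: "nat \<Rightarrow> complex mat \<Rightarrow> real \<Rightarrow> bool" where
  "mbound n M c \<longleftrightarrow> (\<forall>v. vn n (mv M v) \<le> c * vn n v)"

lemma mbound_of_sq: "c \<ge> 0 \<Longrightarrow> (\<And>v. sq n (mv M v) \<le> c^2 * sq n v) \<Longrightarrow> mbound n M c"
  unfolding mbound_def vn_def
  by (metis real_sqrt_abs real_sqrt_le_mono real_sqrt_mult abs_of_nonneg)

lemma sq_of_mbound: "mbound n M c \<Longrightarrow> c \<ge> 0 \<Longrightarrow> sq n (mv M v) \<le> c^2 * sq n v"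
proof -
  assume m: "mbound n M c" and c: "c \<ge> 0"
  have "vn n (mv M v) \<le> c * vn n v" using m unfolding mbound_def by blast
  then have "(vn n (mv M v))^2 \<le> (c * vn n v)^2" using vn_nonneg by (intro power_mono) auto
  then show ?thesis unfolding vn_def using sq_nonneg by (simp add: power_mult_distrib)
qed

lemma mbound_opnorm:
  assumes M: "M \<in> carrier_mat n n" and b: "mbound n M c" and c: "c \<ge> 0"
  shows "opnorm_mat M \<le> c"
  unfolding opnorm_mat_def
proof (rule cSup_least)
  show "{sqrt (\<Sum>i<dim_row M. (cmod (\<Sum>j<dim_col M. M $$ (i, j) * v j))\<^sup>2) |v.
          (\<Sum>j<dim_col M. (cmod (v j))\<^sup>2) \<le> 1} \<noteq> {}"
    by (rule ccontr) (auto dest: spec[of _ "\<lambda>_. 0"])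
next
  fix x assume "x \<in> {sqrt (\<Sum>i<dim_row M. (cmod (\<Sum>j<dim_col M. M $$ (i, j) * v j))\<^sup>2) |v.
          (\<Sum>j<dim_col M. (cmod (v j))\<^sup>2) \<le> 1}"
  then obtain v where v: "x = vn n (mv M v)" "sq n v \<le> 1"
    using M unfolding vn_def sq_def mv_def by auto
  have "x \<le> c * vn n v" using b v unfolding mbound_def by simp
  also have "\<dots> \<le> c * 1" using v(2) c unfolding vn_def by (intro mult_left_mono) auto
  finally show "x \<le> c" by simp
qed

lemma mbound_diag:
  assumes M: "M \<in> carrier_mat n n" and b: "mbound n M c" and c: "c \<ge> 0" and i: "i < n"
  shows "cmod (M $$ (i,i)) \<le> c"
proof -
  have "(cmod (M $$ (i,i)))^2 \<le> sq n (mv M (ev i))"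
  proof -
    have "(cmod (M $$ (i,i)))^2 = (cmod (mv M (ev i) i))^2" using M i by (simp add: mv_ev)
    also have "\<dots> \<le> sq n (mv M (ev i))" unfolding sq_def by (rule member_le_sum) (use i in auto)
    finally show ?thesis .
  qed
  also have "\<dots> \<le> c^2 * sq n (ev i)" by (rule sq_of_mbound[OF b c])
  also have "\<dots> = c^2" using i by (simp add: sq_ev)
  finally show ?thesis using c by (simp add: abs_le_square_iff power2_le_iff_abs_le)
qed

lemma ntr_bound:
  assumes M: "M \<in> carrier_mat n n" and b: "mbound n M c" and c: "c \<ge> 0" and n: "n \<ge> 1"
  shows "cmod (ntr M) \<le> c"
proof -
  have "cmod (\<Sum>i<n. M $$ (i,i)) \<le> (\<Sum>i<n. cmod (M $$ (i,i)))" by (rule norm_sum)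
  also have "\<dots> \<le> (\<Sum>i<n. c)" using mbound_diag[OF M b c] by (intro sum_mono) auto
  finally have "cmod (\<Sum>i<n. M $$ (i,i)) \<le> real n * c" by simp
  then show ?thesis using M n unfolding ntr_def by (simp add: norm_divide field_simps)
qed

lemma ntr_adj_self:
  assumes M: "M \<in> carrier_mat n n"
  shows "ntr (adj M * M) = complex_of_real ((\<Sum>i<n. sq n (mv M (ev i))) / real n)"
proof -
  have "(adj M * M) $$ (i,i) = complex_of_real (sq n (mv M (ev i)))" if "i < n" for i
  proof -
    have "(adj M * M) $$ (i,i) = (\<Sum>l<n. cnj (M $$ (l,i)) * M $$ (l,i))"
      using adj_mult_index[OF M M that that] .
    also have "\<dots> = complex_of_real (sq n (\<lambda>l. M $$ (l,i)))" by (rule sum_cnj_self)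
    also have "sq n (\<lambda>l. M $$ (l,i)) = sq n (mv M (ev i))"
      unfolding sq_def using M that by (simp add: mv_ev)
    finally show ?thesis .
  qed
  then show ?thesis using M unfolding ntr_def by simp
qed

lemma norm2_tr_eq:
  assumes M: "M \<in> carrier_mat n n"
  shows "norm2_tr M = sqrt ((\<Sum>i<n. sq n (mv M (ev i))) / real n)"
  unfolding norm2_tr_def ntr_adj_self[OF M] by simp

lemma norm2_tr_bound:
  assumes M: "M \<in> carrier_mat n n" and b: "mbound n M c" and c: "c \<ge> 0" and n: "n \<ge> 1"
  shows "norm2_tr M \<le> c"
proof -
  have "(\<Sum>i<n. sq n (mv M (ev i))) \<le> (\<Sum>i<n. c^2)"
    using sq_of_mbound[OF b c] sq_ev by (intro sum_mono) (metis lessThan_iff mult.right_neutral)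
  then have "(\<Sum>i<n. sq n (mv M (ev i))) / real n \<le> c^2" using n by (simp add: field_simps)
  then show ?thesis unfolding norm2_tr_eq[OF M] using c by (metis real_sqrt_abs real_sqrt_le_mono abs_of_nonneg)
qed

lemma ntr_le_norm2:
  assumes M: "M \<in> carrier_mat n n" and n: "n \<ge> 1"
  shows "cmod (ntr M) \<le> norm2_tr M"
proof -
  have "cmod (\<Sum>i<n. M $$ (i,i)) \<le> (\<Sum>i<n. cmod (M $$ (i,i)) * 1)"
    using norm_sum by simp
  also have "\<dots> \<le> L2_set (\<lambda>i. cmod (M $$ (i,i))) {..<n} * L2_set (\<lambda>i. 1) {..<n}"
    using L2_set_mult_ineq[of "\<lambda>i. cmod (M $$ (i,i))" "\<lambda>i. 1" "{..<n}"] by simp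
  also have "L2_set (\<lambda>i. 1::real) {..<n} = sqrt (real n)" by (simp add: L2_set_constant)
  finally have a: "cmod (\<Sum>i<n. M $$ (i,i)) \<le> L2_set (\<lambda>i. cmod (M $$ (i,i))) {..<n} * sqrt (real n)" .
  have "L2_set (\<lambda>i. cmod (M $$ (i,i))) {..<n} \<le> sqrt (\<Sum>i<n. sq n (mv M (ev i)))"
    unfolding L2_set_def
  proof (intro real_sqrt_le_mono sum_mono)
    fix i assume i: "i \<in> {..<n}"
    show "(cmod (M $$ (i,i)))^2 \<le> sq n (mv M (ev i))"
    proof -
    have "(cmod (M $$ (i,i)))^2 = (cmod (mv M (ev i) i))^2" using M i by (simp add: mv_ev)
    also have "\<dots> \<le> sq n (mv M (ev i))" unfolding sq_def by (rule member_le_sum) (use i in auto)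
    finally show ?thesis .
  qed
  qed
  define S where "S = (\<Sum>i<n. sq n (mv M (ev i)))"
  have "L2_set (\<lambda>i. cmod (M $$ (i,i))) {..<n} * sqrt (real n) \<le> sqrt S * sqrt (real n)"
    unfolding S_def by (rule mult_right_mono) (use \<open>L2_set _ _ \<le> _\<close> in auto)
  with a have b: "cmod (\<Sum>i<n. M $$ (i,i)) \<le> sqrt S * sqrt (real n)" by linarith
  have sn: "sqrt (real n) > 0" using n by simp
  have e: "sqrt (real n) * sqrt (real n) = real n" by simp
  have "sqrt S * sqrt (real n) / real n = sqrt S * sqrt (real n) / (sqrt (real n) * sqrt (real n))"
    by (simp only: e)
  also have "\<dots> = sqrt S / sqrt (real n)" using sn by (intro nonzero_mult_divide_mult_cancel_right) simp
  also have "\<dots> = sqrt (S / real n)" by (simp add: real_sqrt_divide)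
  finally have c: "sqrt S * sqrt (real n) / real n = sqrt (S / real n)" .
  have "cmod (ntr M) = cmod (\<Sum>i<n. M $$ (i,i)) / real n" using M unfolding ntr_def by (simp add: norm_divide)
  also have "\<dots> \<le> sqrt S * sqrt (real n) / real n" using b by (simp add: divide_right_mono)
  finally show ?thesis using c unfolding norm2_tr_eq[OF M] S_def by simp
qed


lemma mv_add: "A \<in> carrier_mat n n \<Longrightarrow> B \<in> carrier_mat n n \<Longrightarrow> p < n \<Longrightarrow>
   mv (A + B) v p = mv A v p + mv B v p"
  unfolding mv_def by (simp add: sum.distrib algebra_simps)

context
  fixes sc :: "complex \<Rightarrow> 'a::{real_normed_algebra_1,banach} \<Rightarrow> 'a" and st :: "'a \<Rightarrow> 'a"
    and n :: nat and \<phi> :: "'a \<Rightarrow> complex mat"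
  assumes C: "cstar_algebra sc st" and U: "ucp sc st n \<phi>"
begin

lemma ucp_mbound: "mbound n (\<phi> a) (norm a)"
  by (rule mbound_of_sq) (auto intro: ucp_bound[OF C U])

lemma ucp_opnorm: "opnorm_mat (\<phi> a) \<le> norm a"
  by (rule mbound_opnorm[OF lin_carrier[OF C ucp_L[OF C U]] ucp_mbound]) simp

lemma ucp_ntr: "n \<ge> 1 \<Longrightarrow> cmod (ntr (\<phi> a)) \<le> norm a"
  by (rule ntr_bound[OF lin_carrier[OF C ucp_L[OF C U]] ucp_mbound]) simp_all

lemma ucp_mult_err:
  assumes n: "n \<ge> 1" and a': "a' \<in> mult_domain \<phi>"
  shows "norm2_tr (\<phi> (a * b) - \<phi> a * \<phi> b) \<le> 2 * norm (a - a') * norm b"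
proof -
  define x where "x = a - a'"
  have car: "\<phi> y \<in> carrier_mat n n" for y using lin_carrier[OF C ucp_L[OF C U]] .
  have add: "\<phi> (y + z) = \<phi> y + \<phi> z" for y z using lin_add[OF C ucp_L[OF C U]] .
  have md: "\<phi> (a' * b) = \<phi> a' * \<phi> b" using a' unfolding mult_domain_def by blast
  have eq: "mv (\<phi> (a * b) - \<phi> a * \<phi> b) v p = mv (\<phi> (x * b)) v p - mv (\<phi> x) (mv (\<phi> b) v) p"
    if p: "p < n" for v p
  proof -
    have ab: "a * b = x * b + a' * b" "a = x + a'" unfolding x_def by (simp_all add: algebra_simps)
    have "mv (\<phi> (a * b) - \<phi> a * \<phi> b) v p = mv (\<phi> (a * b)) v p - mv (\<phi> a * \<phi> b) v p"
      using car p by (intro mv_minus) (auto intro: mult_carrier_mat)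
    also have "mv (\<phi> (a * b)) v p = mv (\<phi> (x * b)) v p + mv (\<phi> a') (mv (\<phi> b) v) p"
      unfolding ab(1) add md by (simp add: mv_add[OF car mult_carrier_mat[OF car car] p] mv_mult[OF car car p])
    also have "mv (\<phi> a * \<phi> b) v p = mv (\<phi> x) (mv (\<phi> b) v) p + mv (\<phi> a') (mv (\<phi> b) v) p"
      unfolding mv_mult[OF car car p] unfolding ab(2) add mv_add[OF car car p] ..
    finally show ?thesis by simp
  qed
  define c where "c = norm (x * b) + norm x * norm b"
  have c0: "c \<ge> 0" unfolding c_def by simp
  have "mbound n (\<phi> (a * b) - \<phi> a * \<phi> b) c"
    unfolding mbound_def
  proof
    fix v
    have "vn n (mv (\<phi> (a * b) - \<phi> a * \<phi> b) v) \<le> vn n (mv (\<phi> (x * b)) v) + vn n (mv (\<phi> x) (mv (\<phi> b) v))"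
      by (rule vn_triangle) (rule eq)
    also have "\<dots> \<le> norm (x * b) * vn n v + norm x * (norm b * vn n v)"
    proof (rule add_mono)
      show "vn n (mv (\<phi> (x * b)) v) \<le> norm (x * b) * vn n v" using ucp_mbound unfolding mbound_def by blast
      have "vn n (mv (\<phi> x) (mv (\<phi> b) v)) \<le> norm x * vn n (mv (\<phi> b) v)" using ucp_mbound unfolding mbound_def by blast
      also have "\<dots> \<le> norm x * (norm b * vn n v)"
        using ucp_mbound[of b] unfolding mbound_def by (intro mult_left_mono) auto
      finally show "vn n (mv (\<phi> x) (mv (\<phi> b) v)) \<le> norm x * (norm b * vn n v)" .
    qed
    also have "\<dots> = c * vn n v" unfolding c_def by (simp add: algebra_simps)
    finally show "vn n (mv (\<phi> (a * b) - \<phi> a * \<phi> b) v) \<le> c * vn n v" .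
  qed
  then have "norm2_tr (\<phi> (a * b) - \<phi> a * \<phi> b) \<le> c"
    using car n c0 by (intro norm2_tr_bound) (auto intro!: minus_carrier_mat mult_carrier_mat)
  also have "c \<le> 2 * norm x * norm b" unfolding c_def using norm_mult_ineq[of x b] by (simp add: mult.commute)
  finally show ?thesis unfolding x_def .
qed

end

lemma sum_divmod: "(\<Sum>t<k*n. f (t div n) (t mod n)) = (\<Sum>l<k. \<Sum>m<(n::nat). f l m)"
proof (induction k)
  case 0 then show ?case by simp
next
  case (Suc k)
  have "(\<Sum>t<Suc k * n. f (t div n) (t mod n)) = (\<Sum>t<k*n + n. f (t div n) (t mod n))"
    by (simp add: add.commute)
  also have "\<dots> = (\<Sum>t<k*n. f (t div n) (t mod n)) + (\<Sum>m<n. f ((k*n+m) div n) ((k*n+m) mod n))"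
    by (rule sum_split)
  also have "(\<Sum>m<n. f ((k*n+m) div n) ((k*n+m) mod n)) = (\<Sum>m<n. f k m)"
    by (intro sum.cong refl) auto
  finally show ?case using Suc by simp
qed

lemma ustar_hom_ucp:
  fixes sc :: "complex \<Rightarrow> 'a::{real_normed_algebra_1,banach} \<Rightarrow> 'a" and st :: "'a \<Rightarrow> 'a"
  assumes C: "cstar_algebra sc st" and H: "ustar_hom sc st n \<pi>"
  shows "ucp sc st n \<pi>"
proof -
  have L: "complex_linear_into sc n \<pi>" and one: "\<pi> 1 = 1\<^sub>m n"
    and mul: "\<And>a b. \<pi> (a * b) = \<pi> a * \<pi> b" and star: "\<And>a. \<pi> (st a) = adj (\<pi> a)"
    using H unfolding ustar_hom_def by auto
  have car: "\<pi> y \<in> carrier_mat n n" for y using lin_carrier[OF C L] .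
  have "pos_mat (amp n \<pi> k X)" if pa: "pos_amp st k X" for k X
  proof -
    from pa have "\<exists>B. \<forall>i<k. \<forall>j<k. X i j = (\<Sum>l<k. st (B l i) * B l j)" unfolding pos_amp_def .
    then obtain B where B0: "\<forall>i<k. \<forall>j<k. X i j = (\<Sum>l<k. st (B l i) * B l j)" by (rule exE)
    have B: "\<And>i j. i < k \<Longrightarrow> j < k \<Longrightarrow> X i j = (\<Sum>l<k. st (B l i) * B l j)" using B0 by blast
    define Cm where "Cm = amp n \<pi> k B"
    have Cc: "Cm \<in> carrier_mat (k*n) (k*n)" unfolding Cm_def carrier_mat_def using amp_dim[of n \<pi> k B] by blast
    have "amp n \<pi> k X = adj Cm * Cm"
    proof (rule eq_matI)
      fix r s assume "r < dim_row (adj Cm * Cm)" "s < dim_col (adj Cm * Cm)"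
      moreover have "dim_row (adj Cm * Cm) = k*n" "dim_col (adj Cm * Cm) = k*n" using Cc by simp_all
      ultimately have rs: "r < k*n" "s < k*n" by simp_all
      have n0: "n > 0" using rs(1) by (cases "n = 0") simp_all
      have dm: "r div n < k" "s div n < k" "r mod n < n" "s mod n < n"
        using rs n0 less_mult_imp_div_less[of r k n] less_mult_imp_div_less[of s k n] by auto
      have "amp n \<pi> k X $$ (r,s) = \<pi> (X (r div n) (s div n)) $$ (r mod n, s mod n)"
        using rs by (rule amp_idx)
      also have "\<dots> = \<pi> (\<Sum>l<k. st (B l (r div n)) * B l (s div n)) $$ (r mod n, s mod n)"
        using dm by (simp only: B)
      also have "\<dots> = (\<Sum>l<k. \<pi> (st (B l (r div n)) * B l (s div n)) $$ (r mod n, s mod n))"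
        using dm by (intro lin_sum_idx[OF C L])
      also have "\<dots> = (\<Sum>l<k. \<Sum>m<n. cnj (\<pi> (B l (r div n)) $$ (m, r mod n)) * \<pi> (B l (s div n)) $$ (m, s mod n))"
        using dm by (intro sum.cong refl) (simp only: mul star adj_mult_index[OF car car])
      also have "\<dots> = (\<Sum>t<k*n. cnj (\<pi> (B (t div n) (r div n)) $$ (t mod n, r mod n)) * \<pi> (B (t div n) (s div n)) $$ (t mod n, s mod n))"
        by (rule sum_divmod[symmetric])
      also have "\<dots> = (\<Sum>t<k*n. cnj (Cm $$ (t, r)) * Cm $$ (t, s))"
        unfolding Cm_def using rs by (intro sum.cong refl) (simp only: amp_idx lessThan_iff)
      also have "\<dots> = (adj Cm * Cm) $$ (r,s)" using adj_mult_index[OF Cc Cc rs] by (rule sym)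
      finally show "amp n \<pi> k X $$ (r,s) = (adj Cm * Cm) $$ (r,s)" .
    next
      show "dim_row (amp n \<pi> k X) = dim_row (adj Cm * Cm)" using Cc by simp
    next
      show "dim_col (amp n \<pi> k X) = dim_col (adj Cm * Cm)" using Cc by simp
    qed
    then show ?thesis unfolding pos_mat_def using Cc by auto
  qed
  then show ?thesis unfolding ucp_def using L one by blast
qed

lemma ntr_adj_norm2:
  assumes M: "M \<in> carrier_mat n n"
  shows "ntr (adj M * M) = complex_of_real ((norm2_tr M)^2)"
proof -
  have "(\<Sum>i<n. sq n (mv M (ev i))) / real n \<ge> 0" by (intro divide_nonneg_nonneg sum_nonneg sq_nonneg) auto
  then show ?thesis unfolding ntr_adj_self[OF M] norm2_tr_eq[OF M] by simp
qed

lemma tracial_ntr: "n \<ge> 1 \<Longrightarrow> tracial_state_mat n ntr"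
  unfolding tracial_state_mat_def
proof (intro conjI ballI allI)
  fix x y :: "complex mat" assume x: "x \<in> carrier_mat n n" and y: "y \<in> carrier_mat n n"
  show "ntr (x + y) = ntr x + ntr y" using x y unfolding ntr_def by (simp add: sum.distrib add_divide_distrib)
  have "(\<Sum>i<n. (x * y) $$ (i,i)) = (\<Sum>i<n. \<Sum>l<n. x $$ (i,l) * y $$ (l,i))"
    using x y by (intro sum.cong refl, subst mult_index[OF x y]) auto
  also have "\<dots> = (\<Sum>l<n. \<Sum>i<n. x $$ (i,l) * y $$ (l,i))" by (rule sum.swap)
  also have "\<dots> = (\<Sum>l<n. (y * x) $$ (l,l))"
    using x y by (intro sum.cong refl, subst mult_index[OF y x]) (auto simp: mult.commute)
  finally show "ntr (x * y) = ntr (y * x)" using x y unfolding ntr_def by simp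
next
  fix c and x :: "complex mat" assume x: "x \<in> carrier_mat n n"
  show "ntr (c \<cdot>\<^sub>m x) = c * ntr x" using x unfolding ntr_def by (simp add: sum_distrib_left)
next
  fix x :: "complex mat" assume x: "x \<in> carrier_mat n n"
  show "Im (ntr (adj x * x)) = 0" "Re (ntr (adj x * x)) \<ge> 0" using ntr_adj_norm2[OF x] by simp_all
next
  assume "n \<ge> 1"
  then show "ntr (1\<^sub>m n) = 1" unfolding ntr_def by simp
qed


lemma free_le_seq: "free_ultrafilter U \<Longrightarrow> U \<le> sequentially"
proof (rule filter_leI)
  fix P assume fu: "free_ultrafilter U" and ev: "eventually P sequentially"
  then obtain N where N: "\<And>k. k \<ge> N \<Longrightarrow> P k" unfolding eventually_sequentially by blast
  have "\<forall>m\<in>{..<N}. eventually (\<lambda>k. k \<noteq> m) U" using fu unfolding free_ultrafilter_def by blast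
  then have "eventually (\<lambda>k. \<forall>m\<in>{..<N}. k \<noteq> m) U" by (intro eventually_ball_finite) auto
  then show "eventually P U"
    by (rule eventually_mono) (metis N lessThan_iff not_le)
qed

lemma free_nontriv: "free_ultrafilter U \<Longrightarrow> U \<noteq> bot" unfolding free_ultrafilter_def by blast

lemma ntr_diff: "A \<in> carrier_mat n n \<Longrightarrow> B \<in> carrier_mat n n \<Longrightarrow> ntr (A - B) = ntr A - ntr B"
  unfolding ntr_def by (simp add: sum_subtractf diff_divide_distrib)

lemma zero_norm2:
  assumes M: "M \<in> carrier_mat n n" and z: "\<And>i j. i < n \<Longrightarrow> j < n \<Longrightarrow> M $$ (i,j) = 0"
  shows "norm2_tr M = 0"
proof -
  have "sq n (mv M (ev i)) = 0" if "i < n" for i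
    unfolding sq_def using M that z by (simp add: mv_ev)
  then show ?thesis unfolding norm2_tr_eq[OF M] by simp
qed

lemma norm2_nonneg: "M \<in> carrier_mat n n \<Longrightarrow> norm2_tr M \<ge> 0"
  by (simp add: norm2_tr_eq sum_nonneg sq_nonneg)

lemma un_of_norm2:
  assumes car: "\<And>k. x k \<in> carrier_mat (n k) (n k)" and lim: "((\<lambda>k. norm2_tr (x k)) \<longlongrightarrow> 0) F"
  shows "((\<lambda>k. ntr (adj (x k) * x k)) \<longlongrightarrow> 0) F"
proof -
  have "((\<lambda>k. complex_of_real ((norm2_tr (x k))^2)) \<longlongrightarrow> complex_of_real (0^2)) F"
    by (intro tendsto_of_real tendsto_power lim)
  then show ?thesis using ntr_adj_norm2[OF car] by simp
qed

lemma un_zero: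
  assumes car: "\<And>k. x k \<in> carrier_mat (n k) (n k)"
    and z: "\<And>k i j. i < n k \<Longrightarrow> j < n k \<Longrightarrow> x k $$ (i,j) = 0"
  shows "((\<lambda>k. ntr (adj (x k) * x k)) \<longlongrightarrow> 0) F"
  by (rule un_of_norm2[OF car]) (simp add: zero_norm2[OF car z])

lemma norm2_of_un:
  assumes car: "\<And>k. x k \<in> carrier_mat (n k) (n k)" and lim: "((\<lambda>k. ntr (adj (x k) * x k)) \<longlongrightarrow> 0) F"
    and e: "e > 0"
  shows "eventually (\<lambda>k. norm2_tr (x k) < e) F"
proof -
  have "eventually (\<lambda>k. dist (ntr (adj (x k) * x k)) 0 < e^2) F"
    using lim e unfolding tendsto_iff by simp
  then show ?thesis
  proof (rule eventually_mono)
    fix k assume "dist (ntr (adj (x k) * x k)) 0 < e^2"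
    then have "(norm2_tr (x k))^2 < e^2" using ntr_adj_norm2[OF car] by (simp add: norm_power)
    then show "norm2_tr (x k) < e" using e by (simp add: power2_less_imp_less)
  qed
qed

lemma infdist_approx:
  assumes "A \<noteq> {}" "e > 0"
  shows "\<exists>y\<in>A. dist x y < infdist x A + e"
proof -
  have "(INF y\<in>A. dist x y) < infdist x A + e" using assms infdist_notempty[of A x] by simp
  then show ?thesis using assms(1) by (subst (asm) cINF_less_iff) (auto intro: bdd_belowI[where m=0])
qed

lemma one_mult_domain:
  fixes sc :: "complex \<Rightarrow> 'a::{real_normed_algebra_1,banach} \<Rightarrow> 'a"
  assumes C: "cstar_algebra sc st" and U: "ucp sc st n \<phi>"
  shows "1 \<in> mult_domain \<phi>"
  unfolding mult_domain_def using ucp_one[OF C U] lin_dims[OF C ucp_L[OF C U]] by simp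

lemma LFD_sub_AT:
  fixes sc :: "complex \<Rightarrow> 'a::{real_normed_algebra_1,banach} \<Rightarrow> 'a"
  assumes C: "cstar_algebra sc st"
  shows "AT_LFD sc st \<subseteq> AT sc st"
proof
  fix \<tau> assume "\<tau> \<in> AT_LFD sc st"
  then obtain n \<phi> where tr: "tracial_state sc st \<tau>"
    and U: "\<And>k. n k \<ge> 1 \<and> ucp sc st (n k) (\<phi> k)"
    and lt: "\<And>a. (\<lambda>k. ntr (\<phi> k a)) \<longlonglongrightarrow> \<tau> a"
    and ld: "\<And>a. (\<lambda>k. infdist a (mult_domain (\<phi> k))) \<longlonglongrightarrow> 0"
    unfolding AT_LFD_def by blast
  have "(\<lambda>k. norm2_tr (\<phi> k (a * b) - \<phi> k a * \<phi> k b)) \<longlonglongrightarrow> 0" for a b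
  proof -
    have "\<exists>a'\<in>mult_domain (\<phi> k). dist a a' < infdist a (mult_domain (\<phi> k)) + 1 / Suc k" for k
      using one_mult_domain[OF C conjunct2[OF U]] by (intro infdist_approx) auto
    then obtain a' where a': "\<And>k. a' k \<in> mult_domain (\<phi> k)"
      "\<And>k. dist a (a' k) < infdist a (mult_domain (\<phi> k)) + 1 / Suc k" by metis
    have up: "norm2_tr (\<phi> k (a * b) - \<phi> k a * \<phi> k b) \<le> 2 * (infdist a (mult_domain (\<phi> k)) + 1 / Suc k) * norm b" for k
    proof -
      have "norm2_tr (\<phi> k (a * b) - \<phi> k a * \<phi> k b) \<le> 2 * norm (a - a' k) * norm b"
        using ucp_mult_err[OF C conjunct2[OF U] conjunct1[OF U] a'(1)] .
      also have "\<dots> \<le> 2 * (infdist a (mult_domain (\<phi> k)) + 1 / Suc k) * norm b"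
        using a'(2)[of k] by (intro mult_right_mono) (auto simp: dist_norm)
      finally show ?thesis .
    qed
    have inv: "(\<lambda>k. 1 / real (Suc k)) \<longlonglongrightarrow> 0"
      using LIMSEQ_Suc[OF lim_1_over_n] by simp
    have z: "(\<lambda>k. 2 * (infdist a (mult_domain (\<phi> k)) + 1 / Suc k) * norm b) \<longlonglongrightarrow> 2 * (0 + 0) * norm b"
      by (intro tendsto_intros ld inv)
    show ?thesis
    proof (rule tendsto_sandwich[OF _ _ tendsto_const])
      have car: "\<phi> k y \<in> carrier_mat (n k) (n k)" for k y using lin_carrier[OF C ucp_L[OF C conjunct2[OF U]]] .
      show "eventually (\<lambda>k. 0 \<le> norm2_tr (\<phi> k (a * b) - \<phi> k a * \<phi> k b)) sequentially"
        by (intro always_eventually allI norm2_nonneg[OF minus_carrier_mat[OF mult_carrier_mat[OF car car]]])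
      show "eventually (\<lambda>k. norm2_tr (\<phi> k (a * b) - \<phi> k a * \<phi> k b) \<le> 2 * (infdist a (mult_domain (\<phi> k)) + 1 / Suc k) * norm b) sequentially"
        using up by simp
      show "(\<lambda>k. 2 * (infdist a (mult_domain (\<phi> k)) + 1 / Suc k) * norm b) \<longlonglongrightarrow> 0" using z by simp
    qed
  qed
  then show "\<tau> \<in> AT sc st" unfolding AT_def using tr U lt by blast
qed


lemma ustar_md:
  "ustar_hom sc st n \<pi> \<Longrightarrow> mult_domain \<pi> = UNIV"
  unfolding mult_domain_def ustar_hom_def by auto

lemma AT_sub_LFD:
  fixes sc :: "complex \<Rightarrow> 'a::{real_normed_algebra_1,banach} \<Rightarrow> 'a" and st :: "'a \<Rightarrow> 'a"
  assumes FU: "free_ultrafilter U" and C: "cstar_algebra sc st"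
    and SEP: "separable_alg TYPE('a)" and MTS: "matrix_tracially_stable U sc st"
  shows "AT sc st \<subseteq> AT_LFD sc st"
proof
  fix \<tau> assume "\<tau> \<in> AT sc st"
  then obtain n \<phi> where tr: "tracial_state sc st \<tau>"
    and U: "\<And>k. n k \<ge> 1 \<and> ucp sc st (n k) (\<phi> k)"
    and lm: "\<And>a b. (\<lambda>k. norm2_tr (\<phi> k (a * b) - \<phi> k a * \<phi> k b)) \<longlonglongrightarrow> 0"
    and lt: "\<And>a. (\<lambda>k. ntr (\<phi> k a)) \<longlonglongrightarrow> \<tau> a"
    unfolding AT_def by blast
  have n1: "\<And>k. n k \<ge> 1" and Uk: "\<And>k. ucp sc st (n k) (\<phi> k)" using U by auto
  have car: "\<And>k y. \<phi> k y \<in> carrier_mat (n k) (n k)" using lin_carrier[OF C ucp_L[OF C Uk]] .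
  have dims: "\<And>k y. dim_row (\<phi> k y) = n k" "\<And>k y. dim_col (\<phi> k y) = n k"
    using lin_dims[OF C ucp_L[OF C Uk]] by auto
  have le: "U \<le> sequentially" by (rule free_le_seq[OF FU])
  define \<rho> where "\<rho> = (\<lambda>a k. \<phi> k a)"
  have h1: "\<And>a k. \<rho> a k \<in> carrier_mat (n k) (n k)" unfolding \<rho>_def by (rule car)
  have h2: "\<And>a. \<exists>B. \<forall>k. opnorm_mat (\<rho> a k) \<le> B" unfolding \<rho>_def using ucp_opnorm[OF C Uk] by blast
  have h3: "\<And>a b. ultra_null U (\<lambda>k. ntr) (\<lambda>k. \<rho> (a + b) k - (\<rho> a k + \<rho> b k))"
    unfolding ultra_null_def \<rho>_def
    by (rule un_zero[where n=n]) (auto simp: dims lin_add_idx[OF C ucp_L[OF C Uk]] intro!: minus_carrier_mat add_carrier_mat car)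
  have h4: "\<And>c a. ultra_null U (\<lambda>k. ntr) (\<lambda>k. \<rho> (sc c a) k - c \<cdot>\<^sub>m \<rho> a k)"
    unfolding ultra_null_def \<rho>_def
    by (rule un_zero[where n=n]) (auto simp: dims lin_sc_idx[OF C ucp_L[OF C Uk]] intro!: minus_carrier_mat smult_carrier_mat car)
  have h5: "\<And>a b. ultra_null U (\<lambda>k. ntr) (\<lambda>k. \<rho> (a * b) k - \<rho> a k * \<rho> b k)"
    unfolding ultra_null_def \<rho>_def
    by (rule un_of_norm2[where n=n, OF minus_carrier_mat[OF mult_carrier_mat[OF car car]] tendsto_mono[OF le lm]])
  have h6: "\<And>a. ultra_null U (\<lambda>k. ntr) (\<lambda>k. \<rho> (st a) k - adj (\<rho> a k))"
    unfolding ultra_null_def \<rho>_def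
    by (rule un_zero[where n=n]) (auto simp: dims ucp_star[OF C Uk] intro!: minus_carrier_mat adj_carrier car)
  have h7: "ultra_null U (\<lambda>k. ntr) (\<lambda>k. \<rho> 1 k - 1\<^sub>m (n k))"
    unfolding ultra_null_def \<rho>_def
    by (rule un_zero[where n=n]) (auto simp: dims ucp_one[OF C Uk] intro!: minus_carrier_mat one_carrier_mat)
  have uh: "ustar_hom_ultra sc st U n (\<lambda>k. ntr) \<rho>"
    unfolding ustar_hom_ultra_def by (intro conjI allI h1 h2 h3 h4 h5 h6 h7)
  have ts: "\<forall>k. n k \<ge> 1 \<and> tracial_state_mat (n k) ((\<lambda>k. ntr) k)" using n1 tracial_ntr by simp
  have "(\<forall>k. n k \<ge> 1 \<and> tracial_state_mat (n k) ((\<lambda>k. ntr) k)) \<longrightarrow>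
        ustar_hom_ultra sc st U n (\<lambda>k. ntr) \<rho> \<longrightarrow> approx_liftable sc st U n (\<lambda>k. ntr) \<rho>"
    using MTS unfolding matrix_tracially_stable_def by (elim allE)
  then have "approx_liftable sc st U n (\<lambda>k. ntr) \<rho>" using ts uh by (elim impE)
  then obtain E \<pi> where A: "eventually (\<lambda>k. k \<in> E) U \<and> (\<forall>k\<in>E. ustar_hom sc st (n k) (\<pi> k)) \<and>
        (\<forall>a. ultra_null U (\<lambda>k. ntr) (\<lambda>k. \<rho> a k - (if k \<in> E then \<pi> k a else 0\<^sub>m (n k) (n k))))"
    unfolding approx_liftable_def by (elim exE) 
  have E: "eventually (\<lambda>k. k \<in> E) U" using A by (rule conjunct1)
  have hom: "\<And>k. k \<in> E \<Longrightarrow> ustar_hom sc st (n k) (\<pi> k)" using A by blast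
  have un: "\<And>a. ultra_null U (\<lambda>k. ntr) (\<lambda>k. \<rho> a k - (if k \<in> E then \<pi> k a else 0\<^sub>m (n k) (n k)))"
    using A by blast
  have U\<pi>: "\<And>k. k \<in> E \<Longrightarrow> ucp sc st (n k) (\<pi> k)" using ustar_hom_ucp[OF C hom] .
  have car\<pi>: "\<And>k y. k \<in> E \<Longrightarrow> \<pi> k y \<in> carrier_mat (n k) (n k)"
    using lin_carrier[OF C ucp_L[OF C U\<pi>]] .
  have close: "eventually (\<lambda>k. k \<in> E \<and> cmod (ntr (\<pi> k a) - \<tau> a) < e) U" if e: "e > 0" for a e
  proof -
    define y where "y k = \<phi> k a - (if k \<in> E then \<pi> k a else 0\<^sub>m (n k) (n k))" for k
    have cary: "y k \<in> carrier_mat (n k) (n k)" for k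
      unfolding y_def using car\<pi>[of k a] by (intro minus_carrier_mat) auto
    have uny: "((\<lambda>k. ntr (adj (y k) * y k)) \<longlongrightarrow> 0) U" using un[of a] unfolding ultra_null_def y_def \<rho>_def .
    have ev1: "eventually (\<lambda>k. norm2_tr (y k) < e/2) U" using e by (intro norm2_of_un[OF cary uny]) simp
    have "((\<lambda>k. ntr (\<phi> k a)) \<longlongrightarrow> \<tau> a) U" by (rule tendsto_mono[OF le lt])
    then have ev2: "eventually (\<lambda>k. cmod (ntr (\<phi> k a) - \<tau> a) < e/2) U"
    proof -
      have "e/2 > 0" using e by simp
      then show ?thesis using \<open>((\<lambda>k. ntr (\<phi> k a)) \<longlongrightarrow> \<tau> a) U\<close> unfolding tendsto_iff dist_norm by blast
    qed
    show ?thesis using E ev1 ev2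
    proof eventually_elim
      case (elim k)
      then have yk: "y k = \<phi> k a - \<pi> k a" unfolding y_def by simp
      have "ntr (\<pi> k a) - \<tau> a = (ntr (\<phi> k a) - \<tau> a) - ntr (y k)"
        unfolding yk using ntr_diff[OF car car\<pi>[OF elim(1)]] by simp
      moreover have "cmod (ntr (y k)) \<le> norm2_tr (y k)" by (rule ntr_le_norm2[OF cary n1])
      ultimately have "cmod (ntr (\<pi> k a) - \<tau> a) \<le> cmod (ntr (\<phi> k a) - \<tau> a) + norm2_tr (y k)"
        by (metis norm_triangle_ineq4 order_trans add_left_mono)
      then show ?case using elim by simp
    qed
  qed
  have b\<pi>: "cmod (ntr (\<pi> k x)) \<le> norm x" if "k \<in> E" for k x
    using ucp_ntr[OF C U\<pi>[OF that] n1] .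
  have lin\<pi>: "ntr (\<pi> k (a - b)) = ntr (\<pi> k a) - ntr (\<pi> k b)" if "k \<in> E" for k a b
    unfolding ntr_def using lin_dims[OF C ucp_L[OF C U\<pi>[OF that]]]
    by (simp add: lin_diff_idx[OF C ucp_L[OF C U\<pi>[OF that]]] sum_subtractf diff_divide_distrib)
  have b\<tau>: "cmod (\<tau> x) \<le> norm x" for x
  proof (rule tendsto_upperbound)
    show "(\<lambda>k. cmod (ntr (\<phi> k x))) \<longlonglongrightarrow> cmod (\<tau> x)" by (intro tendsto_norm lt)
    show "eventually (\<lambda>k. norm x \<ge> cmod (ntr (\<phi> k x))) sequentially"
      using ucp_ntr[OF C Uk n1] by simp
  qed simp
  have lin\<tau>: "\<tau> (a - b) = \<tau> a - \<tau> b" for a b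
  proof -
    have "\<tau> ((a - b) + b) = \<tau> (a - b) + \<tau> b" using tr unfolding tracial_state_def by blast
    then show ?thesis by simp
  qed
  obtain D :: "'a set" where D: "countable D" "closure D = UNIV" using SEP unfolding separable_alg_def by blast
  have Dne: "D \<noteq> {}" using D(2) by auto
  define d where "d = from_nat_into D"
  have dense: "\<exists>i. norm (a - d i) < e" if e0: "e > 0" for a e
  proof -
    have "a \<in> closure D" using D(2) by simp
    then obtain y where y: "y \<in> D" "dist y a < e" using e0 unfolding closure_approachable by blast
    then obtain i where "y = d i" using range_from_nat_into[OF Dne D(1)] unfolding d_def by blast
    then show ?thesis using y by (metis dist_commute dist_norm)
  qed
  define P where "P j k = (\<forall>i\<in>{..j}. k \<in> E \<and> cmod (ntr (\<pi> k (d i)) - \<tau> (d i)) < 1 / Suc j)" for j k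
  have evP: "eventually (P j) U" for j
    unfolding P_def by (intro eventually_ball_finite ballI close) auto
  have exP: "\<exists>k. P j k" for j
    using eventually_happens[OF evP[of j]] free_nontriv[OF FU] by blast
  define kk where "kk j = (SOME k. P j k)" for j
  have Pk: "P j (kk j)" for j unfolding kk_def using exP[of j] by (rule someI_ex)
  have kE: "kk j \<in> E" for j using Pk[of j] unfolding P_def by auto
  have kc: "cmod (ntr (\<pi> (kk j) (d i)) - \<tau> (d i)) < 1 / Suc j" if "i \<le> j" for i j
    using Pk[of j] that unfolding P_def by auto
  have conv: "(\<lambda>j. ntr (\<pi> (kk j) a)) \<longlonglongrightarrow> \<tau> a" for a
  proof (rule LIMSEQ_I)
    fix r :: real assume r: "r > 0"
    obtain i where i: "norm (a - d i) < r/3" using dense[of "r/3"] r by auto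
    obtain N0 where N0: "inverse (real (Suc N0)) < r/3" using reals_Archimedean[of "r/3"] r by auto
    show "\<exists>no. \<forall>j\<ge>no. norm (ntr (\<pi> (kk j) a) - \<tau> a) < r"
    proof (intro exI allI impI)
      fix j assume j: "j \<ge> max i N0"
      have t1: "cmod (ntr (\<pi> (kk j) a) - ntr (\<pi> (kk j) (d i))) < r/3"
        using lin\<pi>[OF kE, of j a "d i"] b\<pi>[OF kE, of j "a - d i"] i by simp
      have "1 / real (Suc j) \<le> inverse (real (Suc N0))"
        using j by (simp add: divide_inverse le_imp_inverse_le)
      then have t2: "cmod (ntr (\<pi> (kk j) (d i)) - \<tau> (d i)) < r/3" using kc[of i j] j N0 by simp
      have t3: "cmod (\<tau> (d i) - \<tau> a) < r/3"
        using lin\<tau>[of "d i" a] b\<tau>[of "d i - a"] i by (simp add: norm_minus_commute)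
      have "norm (ntr (\<pi> (kk j) a) - \<tau> a) \<le> cmod (ntr (\<pi> (kk j) a) - ntr (\<pi> (kk j) (d i)))
          + cmod (ntr (\<pi> (kk j) (d i)) - \<tau> (d i)) + cmod (\<tau> (d i) - \<tau> a)"
      proof -
        have tri: "norm (P + Q + R) \<le> norm P + norm Q + norm R" for P Q R :: complex
          using norm_triangle_ineq[of "P+Q" R] norm_triangle_ineq[of P Q] by linarith
        have "ntr (\<pi> (kk j) a) - \<tau> a = (ntr (\<pi> (kk j) a) - ntr (\<pi> (kk j) (d i)))
          + (ntr (\<pi> (kk j) (d i)) - \<tau> (d i)) + (\<tau> (d i) - \<tau> a)" by simp
        then show ?thesis using tri by metis
      qed
      then show "norm (ntr (\<pi> (kk j) a) - \<tau> a) < r" using t1 t2 t3 by simp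
    qed
  qed
  have md: "(\<lambda>j. infdist a (mult_domain (\<pi> (kk j)))) \<longlonglongrightarrow> 0" for a
    using ustar_md[OF hom[OF kE]] by simp
  have nk: "\<forall>j. n (kk j) \<ge> 1 \<and> ucp sc st (n (kk j)) (\<pi> (kk j))" using n1 U\<pi>[OF kE] by blast
  show "\<tau> \<in> AT_LFD sc st"
    unfolding AT_LFD_def
    by (intro CollectI conjI tr exI[of _ "\<lambda>j. n (kk j)"] exI[of _ "\<lambda>j. \<pi> (kk j)"] nk allI conv md)
qed

theorem theorem4p14:
  fixes U :: "nat filter"
    and sc :: "complex \<Rightarrow> 'a::{real_normed_algebra_1,banach} \<Rightarrow> 'a"
    and st :: "'a \<Rightarrow> 'a"
  assumes "free_ultrafilter U"
    and "cstar_algebra sc st"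
    and "separable_alg TYPE('a)"
    and "matrix_tracially_stable U sc st"
  shows "AT sc st = AT_LFD sc st"
  using AT_sub_LFD[OF assms] LFD_sub_AT[OF assms(2)] by blast

end
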